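(* Let $G$ be a finite induced regular group and let $x\in G$ be such that $C_G(x)$ is a maximal centralizer and $C_G(x)\neq \beta_G(x)\cup Z(G)$. Then there is an element $y\in C_G(x)\setminus\beta_G(x)$ such that the order of $yZ(G)$ in $G/Z(G)$ is a prime.
   Context: For a finite group $G$, $C_G(x)$ denotes the centralizer of $x\in G$ and $Z(G)$ the center; $\beta_G(x)=\{y\in G\mid C_G(y)=C_G(x)\}$. The non-centralizer graph $\Upsilon_G$ is the simple graph with vertex set $G$ in which two distinct vertices $x,y$ are adjacent iff $C_G(x)\neq C_G(y)$; the induced non-centralizer graph $\Upsilon_{G\setminus Z(G)}$ is its induced subgraph on the vertex set $G\setminus Z(G)$. $G$ is called induced regular if $\Upsilon_{G\setminus Z(G)}$ is a regular graph (all vertices have the same degree). A centralizer $C_G(x)$ is called maximal if it is not contained in any other proper centralizer of $G$. *)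

theory Defs
  imports "HOL-Algebra.Algebra"
begin

definition centralizer_of :: "('a, 'b) monoid_scheme \<Rightarrow> 'a \<Rightarrow> 'a set" where
  "centralizer_of G x = {y \<in> carrier G. x \<otimes>\<^bsub>G\<^esub> y = y \<otimes>\<^bsub>G\<^esub> x}"

definition center_of :: "('a, 'b) monoid_scheme \<Rightarrow> 'a set" where
  "center_of G = {z \<in> carrier G. \<forall>y \<in> carrier G. z \<otimes>\<^bsub>G\<^esub> y = y \<otimes>\<^bsub>G\<^esub> z}"

definition beta_of :: "('a, 'b) monoid_scheme \<Rightarrow> 'a \<Rightarrow> 'a set" where
  "beta_of G x = {y \<in> carrier G. centralizer_of G y = centralizer_of G x}"

definition nc_adj :: "('a, 'b) monoid_scheme \<Rightarrow> 'a \<Rightarrow> 'a \<Rightarrow> bool" where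
  "nc_adj G x y \<longleftrightarrow> x \<noteq> y \<and> centralizer_of G x \<noteq> centralizer_of G y"

definition induced_nc_degree :: "('a, 'b) monoid_scheme \<Rightarrow> 'a \<Rightarrow> nat" where
  "induced_nc_degree G v = card {w \<in> carrier G - center_of G. nc_adj G v w}"

definition induced_regular :: "('a, 'b) monoid_scheme \<Rightarrow> bool" where
  "induced_regular G \<longleftrightarrow>
     (\<forall>u \<in> carrier G - center_of G. \<forall>v \<in> carrier G - center_of G.
        induced_nc_degree G u = induced_nc_degree G v)"

definition maximal_centralizer :: "('a, 'b) monoid_scheme \<Rightarrow> 'a \<Rightarrow> bool" where
  "maximal_centralizer G x \<longleftrightarrow> x \<in> carrier G \<and> centralizer_of G x \<noteq> carrier G \<and>
     (\<forall>y \<in> carrier G. centralizer_of G y \<noteq> carrier G \<longrightarrow>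
        centralizer_of G x \<subseteq> centralizer_of G y \<longrightarrow> centralizer_of G y = centralizer_of G x)"

end

theory Submission
  imports Defs
begin

lemma comm_mult_lem:
  fixes G (structure)
  assumes "group G" "a \<in> carrier G" "b \<in> carrier G" "g \<in> carrier G"
    "a \<otimes> g = g \<otimes> a" "b \<otimes> g = g \<otimes> b"
  shows "(a \<otimes> b) \<otimes> g = g \<otimes> (a \<otimes> b)"
proof -
  interpret group G by fact
  have "(a \<otimes> b) \<otimes> g = a \<otimes> (b \<otimes> g)" using assms(2-4) by (simp add: m_assoc)
  also have "\<dots> = a \<otimes> (g \<otimes> b)" by (simp only: assms(6))
  also have "\<dots> = (a \<otimes> g) \<otimes> b" using assms(2-4) by (simp add: m_assoc)
  also have "\<dots> = (g \<otimes> a) \<otimes> b" by (simp only: assms(5))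
  also have "\<dots> = g \<otimes> (a \<otimes> b)" using assms(2-4) by (simp add: m_assoc)
  finally show ?thesis .
qed

lemma center_normal:
  fixes G (structure)
  assumes "group G"
  shows "center_of G \<lhd> G"
proof -
  interpret group G by fact
  have sub: "subgroup (center_of G) G"
  proof (rule subgroupI)
    show "center_of G \<subseteq> carrier G" by (auto simp: center_of_def)
    show "center_of G \<noteq> {}" by (auto simp: center_of_def)
    fix a assume a: "a \<in> center_of G"
    show "inv a \<in> center_of G"
      unfolding center_of_def
    proof (safe)
      show "inv a \<in> carrier G" using a by (auto simp: center_of_def)
      fix y assume y: "y \<in> carrier G"
      have ac: "a \<in> carrier G" and c: "a \<otimes> y = y \<otimes> a" using a y by (auto simp: center_of_def)
      have 1: "a \<otimes> (inv a \<otimes> y) = y"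
      proof -
        have "a \<otimes> (inv a \<otimes> y) = (a \<otimes> inv a) \<otimes> y" using ac y by (simp only: m_assoc inv_closed)
        also have "\<dots> = y" using ac y by simp
        finally show ?thesis .
      qed
      have 2: "a \<otimes> (y \<otimes> inv a) = y"
      proof -
        have "a \<otimes> (y \<otimes> inv a) = (a \<otimes> y) \<otimes> inv a" using ac y by (simp add: m_assoc)
        also have "\<dots> = (y \<otimes> a) \<otimes> inv a" using c by simp
        also have "\<dots> = y" using ac y by (simp add: m_assoc)
        finally show ?thesis .
      qed
      have "a \<otimes> (inv a \<otimes> y) = a \<otimes> (y \<otimes> inv a)" using 1 2 by simp
      then show "inv a \<otimes> y = y \<otimes> inv a" using ac y by simp
    qed
  next
    fix a b assume "a \<in> center_of G" "b \<in> center_of G"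
    then show "a \<otimes> b \<in> center_of G" unfolding center_of_def
    proof (safe)
      fix y assume "a \<in> carrier G" "b \<in> carrier G" "y \<in> carrier G"
        "\<forall>y\<in>carrier G. a \<otimes> y = y \<otimes> a" "\<forall>y\<in>carrier G. b \<otimes> y = y \<otimes> b"
      then show "a \<otimes> b \<otimes> y = y \<otimes> (a \<otimes> b)"
        using comm_mult_lem[OF assms(1)] by blast
    qed (blast intro: m_closed)
  qed
  show ?thesis
  proof (rule normalI[OF sub], intro ballI)
    fix g assume g: "g \<in> carrier G"
    show "center_of G #> g = g <# center_of G"
    proof -
      have "\<And>h. h \<in> center_of G \<Longrightarrow> h \<otimes> g = g \<otimes> h" using g by (auto simp: center_of_def)
      then have "(\<Union>h\<in>center_of G. {h \<otimes> g}) = (\<Union>h\<in>center_of G. {g \<otimes> h})"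
        by (intro SUP_cong) auto
      then show ?thesis unfolding r_coset_def l_coset_def .
    qed
  qed
qed

lemma quot_ord_prime:
  fixes G (structure)
  assumes "group G" "y \<in> carrier G" "y \<notin> center_of G" "y [^] p \<in> center_of G" "Factorial_Ring.prime (p::nat)"
  shows "Factorial_Ring.prime (group.ord (G Mod center_of G) (center_of G #> y))"
proof -
  interpret group G by fact
  interpret N: normal "center_of G" G using center_normal assms(1) .
  have QG: "group (G Mod center_of G)" by (rule N.factorgroup_is_group)
  have hom: "(\<lambda>a. center_of G #> a) \<in> hom G (G Mod center_of G)" by (rule N.r_coset_hom_Mod)
  have Yc: "center_of G #> y \<in> carrier (G Mod center_of G)"
    using assms(2) by (simp add: carrier_FactGroup)
  have "(center_of G #> y) [^]\<^bsub>G Mod center_of G\<^esub> p = center_of G #> (y [^] p)"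
    using hom_nat_pow[OF hom assms(2) assms(1) QG] by simp
  also have "\<dots> = center_of G" using N.rcos_const[OF assms(1) assms(4)] .
  finally have "(center_of G #> y) [^]\<^bsub>G Mod center_of G\<^esub> p = \<one>\<^bsub>G Mod center_of G\<^esub>" by simp
  then have d: "group.ord (G Mod center_of G) (center_of G #> y) dvd p"
    using group.pow_eq_id[OF QG Yc] by simp
  have "center_of G #> y \<noteq> center_of G"
  proof
    assume "center_of G #> y = center_of G"
    moreover have "y \<in> center_of G #> y" using assms(2) N.one_closed
      unfolding r_coset_def by force
    ultimately show False using assms(3) by simp
  qed
  then have "group.ord (G Mod center_of G) (center_of G #> y) \<noteq> 1"
    using group.ord_eq_1[OF QG Yc] by simp
  then show ?thesis using d assms(5) by (metis prime_nat_iff)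
qed

theorem proposition3p3:
  fixes G (structure) and x :: 'a
  assumes "group G" and "finite (carrier G)"
    and "induced_regular G"
    and "x \<in> carrier G"
    and "maximal_centralizer G x"
    and "centralizer_of G x \<noteq> beta_of G x \<union> center_of G"
  shows "\<exists>y \<in> centralizer_of G x - beta_of G x.
           Factorial_Ring.prime (group.ord (G Mod center_of G) (center_of G #> y))"
proof -
  interpret group G by fact
  define C where "C = centralizer_of G"
  define Z where "Z = center_of G"
  define A where "A = {a \<in> carrier G. \<forall>g \<in> C x. a \<otimes> g = g \<otimes> a}"
  have xc: "x \<in> carrier G" by fact
  have Cmem: "\<And>v g. g \<in> C v \<longleftrightarrow> g \<in> carrier G \<and> v \<otimes> g = g \<otimes> v"
    by (simp add: C_def centralizer_of_def)
  have Csub: "\<And>v. C v \<subseteq> carrier G" using Cmem by blast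
  have Zmem: "\<And>w. w \<in> carrier G \<Longrightarrow> w \<in> Z \<longleftrightarrow> C w = carrier G"
  proof -
    fix w assume w: "w \<in> carrier G"
    show "w \<in> Z \<longleftrightarrow> C w = carrier G"
    proof
      assume "w \<in> Z" then show "C w = carrier G"
        using Csub by (auto simp: Z_def center_of_def Cmem)
    next
      assume "C w = carrier G" then show "w \<in> Z"
        using w Cmem by (auto simp: Z_def center_of_def)
    qed
  qed
  have mc: "maximal_centralizer G x" by fact
  have CxG: "C x \<noteq> carrier G" using mc by (simp add: maximal_centralizer_def C_def)
  have maxA: "\<And>a. a \<in> A \<Longrightarrow> C a = carrier G \<or> C a = C x"
  proof -
    fix a assume a: "a \<in> A"
    have "C x \<subseteq> C a" using a Csub by (auto simp: A_def Cmem)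
    then show "C a = carrier G \<or> C a = C x"
      using mc a by (auto simp: maximal_centralizer_def C_def A_def)
  qed
  have Aeq: "A = beta_of G x \<union> Z"
  proof
    show "A \<subseteq> beta_of G x \<union> Z"
    proof
      fix a assume a: "a \<in> A"
      then have ac: "a \<in> carrier G" by (simp add: A_def)
      show "a \<in> beta_of G x \<union> Z"
        using maxA[OF a] Zmem[OF ac] ac by (auto simp: beta_of_def C_def)
    qed
  next
    show "beta_of G x \<union> Z \<subseteq> A"
    proof
      fix y assume y: "y \<in> beta_of G x \<union> Z"
      show "y \<in> A"
      proof (cases "y \<in> Z")
        case True
        then show ?thesis using Csub by (auto simp: A_def Z_def center_of_def)
      next
        case False
        then have "y \<in> carrier G" "C y = C x" using y by (auto simp: beta_of_def C_def)
        moreover have "\<forall>g \<in> C x. y \<otimes> g = g \<otimes> y" using \<open>C y = C x\<close> Cmem by blast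
        ultimately show ?thesis by (simp add: A_def)
      qed
    qed
  qed
  have betaZ: "\<And>v. v \<in> carrier G - Z \<Longrightarrow> beta_of G v \<subseteq> carrier G - Z"
  proof
    fix v w assume v: "v \<in> carrier G - Z" and w: "w \<in> beta_of G v"
    then have "w \<in> carrier G" "C w = C v" by (auto simp: beta_of_def C_def)
    then show "w \<in> carrier G - Z" using v Zmem by auto
  qed
  have finG: "finite (carrier G)" by fact
  have deg: "\<And>v. v \<in> carrier G - Z \<Longrightarrow>
      induced_nc_degree G v = card (carrier G - Z) - card (beta_of G v)"
  proof -
    fix v assume v: "v \<in> carrier G - Z"
    have "{w \<in> carrier G - center_of G. nc_adj G v w} = (carrier G - Z) - beta_of G v"
      using v by (auto simp: nc_adj_def beta_of_def Z_def)
    then show "induced_nc_degree G v = card (carrier G - Z) - card (beta_of G v)"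
      unfolding induced_nc_degree_def
      using card_Diff_subset[OF finite_subset[OF betaZ[OF v]] betaZ[OF v]] finG v by auto
  qed
  have xnZ: "x \<in> carrier G - Z" using xc Zmem CxG by auto
  have Cm: "\<And>g h. g \<in> C x \<Longrightarrow> h \<in> C x \<Longrightarrow> g \<otimes> h \<in> C x"
  proof -
    fix g h assume "g \<in> C x" "h \<in> C x"
    then have "g \<in> carrier G" "h \<in> carrier G" "g \<otimes> x = x \<otimes> g" "h \<otimes> x = x \<otimes> h" by (auto simp: Cmem)
    then show "g \<otimes> h \<in> C x" using comm_mult_lem[OF assms(1) _ _ xc] by (simp add: Cmem)
  qed
  have Cp: "\<And>g n. g \<in> C x \<Longrightarrow> g [^] (n::nat) \<in> C x"
  proof -
    fix g and n :: nat assume "g \<in> C x"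
    then have "g \<in> carrier G" "g \<otimes> x = x \<otimes> g" by (auto simp: Cmem)
    then show "g [^] n \<in> C x" using group_commutes_pow[of g x n] xc by (simp add: Cmem)
  qed
  have Am: "\<And>a b. a \<in> A \<Longrightarrow> b \<in> A \<Longrightarrow> a \<otimes> b \<in> A"
  proof -
    fix a b assume ab: "a \<in> A" "b \<in> A"
    show "a \<otimes> b \<in> A" unfolding A_def
    proof (safe)
      show "a \<otimes> b \<in> carrier G" using ab by (simp add: A_def)
      fix g assume g: "g \<in> C x"
      have "a \<in> carrier G" "b \<in> carrier G" "a \<otimes> g = g \<otimes> a" "b \<otimes> g = g \<otimes> b"
        using ab g unfolding A_def by blast+
      moreover have "g \<in> carrier G" using g Csub by blast
      ultimately show "a \<otimes> b \<otimes> g = g \<otimes> (a \<otimes> b)"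
        using comm_mult_lem[OF assms(1)] by blast
    qed
  qed
  have Ap: "\<And>a n. a \<in> A \<Longrightarrow> a [^] (n::nat) \<in> A"
  proof -
    fix a and n :: nat assume a: "a \<in> A"
    show "a [^] n \<in> A" unfolding A_def
    proof (safe)
      show "a [^] n \<in> carrier G" using a by (simp add: A_def)
      fix g assume "g \<in> C x"
      then show "a [^] n \<otimes> g = g \<otimes> a [^] n"
        using group_commutes_pow[of a g n] a Csub by (auto simp: A_def)
    qed
  qed
  have Ainv: "\<And>a. a \<in> A \<Longrightarrow> inv a \<in> A"
  proof -
    fix a assume a: "a \<in> A"
    show "inv a \<in> A" unfolding A_def
    proof (safe)
      show "inv a \<in> carrier G" using a by (auto simp: A_def)
      fix y assume "y \<in> C x"
      then have y: "y \<in> carrier G" using Csub by auto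
      have ac: "a \<in> carrier G" and c: "a \<otimes> y = y \<otimes> a" using a \<open>y \<in> C x\<close> by (auto simp: A_def)
      have 1: "a \<otimes> (inv a \<otimes> y) = y"
      proof -
        have "a \<otimes> (inv a \<otimes> y) = (a \<otimes> inv a) \<otimes> y" using ac y by (simp only: m_assoc inv_closed)
        also have "\<dots> = y" using ac y by simp
        finally show ?thesis .
      qed
      have 2: "a \<otimes> (y \<otimes> inv a) = y"
      proof -
        have "a \<otimes> (y \<otimes> inv a) = (a \<otimes> y) \<otimes> inv a" using ac y by (simp add: m_assoc)
        also have "\<dots> = (y \<otimes> a) \<otimes> inv a" using c by simp
        also have "\<dots> = y" using ac y by (simp add: m_assoc)
        finally show ?thesis .
      qed
      have "a \<otimes> (inv a \<otimes> y) = a \<otimes> (y \<otimes> inv a)" using 1 2 by simp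
      then show "inv a \<otimes> y = y \<otimes> inv a" using ac y by simp
    qed
  qed
  have xC: "x \<in> C x" using xc by (simp add: Cmem)
  have AC: "A \<subseteq> C x"
  proof
    fix a assume "a \<in> A"
    then have "a \<in> carrier G" "a \<otimes> x = x \<otimes> a" using xC unfolding A_def by blast+
    then show "a \<in> C x" by (simp add: Cmem)
  qed
  have ZA: "Z \<subseteq> A" using Aeq by auto
  have oneZ: "\<one> \<in> Z" by (auto simp: Z_def center_of_def)
  have "C x \<noteq> A" using assms(6) Aeq by (simp add: C_def Z_def)
  then obtain z0 where z0: "z0 \<in> C x - A" using AC by blast
  define P where "P = (\<lambda>n::nat. n \<ge> 1 \<and> (\<exists>z \<in> C x - A. z [^] n \<in> A))"
  have "P (order G)"
  proof -
    have "order G > 0" using finG order_gt_0_iff_finite by blast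
    moreover have "z0 [^] order G \<in> A"
    proof -
      have "z0 \<in> carrier G" using z0 Csub by blast
      then have "z0 [^] order G = \<one>" by (rule pow_order_eq_1)
      then show ?thesis using ZA oneZ by auto
    qed
    ultimately show ?thesis using z0 by (auto simp: P_def)
  qed
  define n where "n = (LEAST n. P n)"
  have Pn: "P n" unfolding n_def by (rule LeastI) fact
  have nmin: "\<And>m. P m \<Longrightarrow> n \<le> m" unfolding n_def by (rule Least_le)
  obtain z1 where z1: "z1 \<in> C x - A" "z1 [^] n \<in> A" and n1: "n \<ge> 1" using Pn by (auto simp: P_def)
  have z1c: "z1 \<in> carrier G" using z1 Csub by blast
  have "n \<noteq> 1" using z1 z1c by auto
  then obtain p :: nat where p: "Factorial_Ring.prime p" "p dvd n" using prime_factor_nat by blast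
  then obtain m where nm: "n = p * m" by blast
  have "m \<ge> 1" using nm n1 by (cases m) auto
  moreover have "m < n"
  proof -
    have "1 * m < p * m" using prime_gt_1_nat[OF p(1)] \<open>m \<ge> 1\<close> by (intro mult_strict_right_mono) auto
    then show ?thesis using nm by simp
  qed
  ultimately have notPm: "\<not> P m" using nmin by fastforce
  define z where "z = z1 [^] m"
  have zC: "z \<in> C x" using Cp z1 by (simp add: z_def)
  have zA: "z \<notin> A" using notPm z1 \<open>m \<ge> 1\<close> by (auto simp: P_def z_def)
  have zc: "z \<in> carrier G" using zC Csub by auto
  have zpA: "z [^] p \<in> A" using z1 z1c nm by (simp add: z_def nat_pow_pow mult.commute)
  show ?thesis
  proof (rule ccontr)
    assume neg: "\<not> ?thesis"
    have good: "\<And>y. y \<in> C x - A \<Longrightarrow> y [^] p \<in> Z \<Longrightarrow> False"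
    proof -
      fix y assume y: "y \<in> C x - A" "y [^] p \<in> Z"
      have yc: "y \<in> carrier G" using y Csub by auto
      have "Factorial_Ring.prime (group.ord (G Mod center_of G) (center_of G #> y))"
        using quot_ord_prime[OF assms(1) yc _ _ p(1)] y ZA by (auto simp: Z_def)
      moreover have "y \<in> centralizer_of G x - beta_of G x" using y Aeq by (auto simp: C_def)
      ultimately show False using neg by blast
    qed
    have zpZ: "z [^] p \<notin> Z" using good zC zA by blast
    have Czp: "C (z [^] p) = C x" using maxA[OF zpA] Zmem zpZ zc by auto
    have key: "\<And>a. a \<in> A \<Longrightarrow> z \<otimes> a \<in> beta_of G z"
    proof -
      fix a assume a: "a \<in> A"
      have ac: "a \<in> carrier G" using a by (simp add: A_def)
      have az: "a \<otimes> z = z \<otimes> a" using a zC by (simp add: A_def)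
      have zaC: "z \<otimes> a \<in> C x" using Cm zC AC a by auto
      have zanA: "z \<otimes> a \<notin> A"
      proof
        assume "z \<otimes> a \<in> A"
        then have "(z \<otimes> a) \<otimes> inv a \<in> A" using Am Ainv a by blast
        then show False using zA zc ac by (simp add: m_assoc)
      qed
      define u where "u = (z \<otimes> a) [^] p"
      have u: "u = z [^] p \<otimes> a [^] p" unfolding u_def
        using pow_mult_distrib[OF az[symmetric] zc ac] .
      have uZ: "u \<notin> Z" using good zaC zanA by (auto simp: u_def)
      have uA: "u \<in> A" using u Am Ap zpA a by simp
      have uc: "u \<in> carrier G" using uA by (simp add: A_def)
      have Cu: "C u = C x" using maxA[OF uA] Zmem[OF uc] uZ by auto
      have "C (z \<otimes> a) = C z"
      proof
        show "C (z \<otimes> a) \<subseteq> C z"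
        proof
          fix g assume g: "g \<in> C (z \<otimes> a)"
          then have gc: "g \<in> carrier G" and gza: "(z \<otimes> a) \<otimes> g = g \<otimes> (z \<otimes> a)" by (auto simp: Cmem)
          have zac: "z \<otimes> a \<in> carrier G" using zc ac by simp
          have "u \<otimes> g = g \<otimes> u" unfolding u_def using group_commutes_pow[OF gza zac gc] .
          then have "g \<in> C x" using Cu gc by (auto simp: Cmem)
          then have ag: "a \<otimes> g = g \<otimes> a" using a by (simp add: A_def)
          have "(z \<otimes> g) \<otimes> a = z \<otimes> (g \<otimes> a)" using zc ac gc by (simp add: m_assoc)
          also have "\<dots> = z \<otimes> (a \<otimes> g)" by (simp only: ag)
          also have "\<dots> = (z \<otimes> a) \<otimes> g" using zc ac gc by (simp add: m_assoc)
          also have "\<dots> = g \<otimes> (z \<otimes> a)" by (rule gza)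
          also have "\<dots> = (g \<otimes> z) \<otimes> a" using zc ac gc by (simp add: m_assoc)
          finally have "z \<otimes> g = g \<otimes> z" using zc ac gc r_cancel by (meson m_closed)
          then show "g \<in> C z" using gc by (simp add: Cmem)
        qed
      next
        show "C z \<subseteq> C (z \<otimes> a)"
        proof
          fix g assume g: "g \<in> C z"
          then have gc: "g \<in> carrier G" and gz: "z \<otimes> g = g \<otimes> z" by (auto simp: Cmem)
          have "z [^] p \<otimes> g = g \<otimes> z [^] p" using group_commutes_pow[OF gz zc gc] .
          then have "g \<in> C x" using Czp gc by (auto simp: Cmem)
          then have ag: "a \<otimes> g = g \<otimes> a" using a by (simp add: A_def)
          have "(z \<otimes> a) \<otimes> g = g \<otimes> (z \<otimes> a)"
          proof -
            have "(z \<otimes> a) \<otimes> g = z \<otimes> (a \<otimes> g)" using zc ac gc by (simp add: m_assoc)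
            also have "\<dots> = z \<otimes> (g \<otimes> a)" by (simp only: ag)
            also have "\<dots> = (z \<otimes> g) \<otimes> a" using zc ac gc by (simp add: m_assoc)
            also have "\<dots> = (g \<otimes> z) \<otimes> a" by (simp only: gz)
            also have "\<dots> = g \<otimes> (z \<otimes> a)" using zc ac gc by (simp add: m_assoc)
            finally show ?thesis .
          qed
          then show "g \<in> C (z \<otimes> a)" using gc zc ac by (simp add: Cmem)
        qed
      qed
      then show "z \<otimes> a \<in> beta_of G z" using zc ac by (simp add: beta_of_def C_def)
    qed
    have znZ: "z \<in> carrier G - Z" using zc zA ZA by auto
    have inj: "inj_on (\<lambda>a. z \<otimes> a) A"
    proof (rule inj_onI)
      fix a b assume ab: "a \<in> A" "b \<in> A" "z \<otimes> a = z \<otimes> b"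
      then have "a \<in> carrier G" "b \<in> carrier G" using AC Csub by blast+
      then show "a = b" using l_cancel[of z a b] zc ab(3) by blast
    qed
    have finbz: "finite (beta_of G z)" using finite_subset[OF betaZ[OF znZ]] finG by blast
    have imgA: "(\<lambda>a. z \<otimes> a) ` A \<subseteq> beta_of G z" using key by blast
    have "card A \<le> card (beta_of G z)" by (rule card_inj_on_le[OF inj imgA finbz])
    moreover have "card (beta_of G x) < card A"
    proof (rule psubset_card_mono)
      show "finite A" using AC Csub by (intro finite_subset[OF _ finG]) blast
      have "\<one> \<notin> beta_of G x" using betaZ[OF xnZ] oneZ by blast
      moreover have "\<one> \<in> A" using ZA oneZ by blast
      ultimately show "beta_of G x \<subset> A" using Aeq by blast
    qed
    moreover have "induced_nc_degree G z = induced_nc_degree G x"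
      using assms(3) znZ xnZ unfolding induced_regular_def Z_def by blast
    moreover have "card (beta_of G z) \<le> card (carrier G - Z)" "card (beta_of G x) \<le> card (carrier G - Z)"
      using card_mono[OF _ betaZ[OF znZ]] card_mono[OF _ betaZ[OF xnZ]] finG by simp_all
    ultimately show False using deg[OF znZ] deg[OF xnZ] by linarith
  qed
qed

end
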